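(* Let $T$ be a tree with $t$ vertices, let $K>1$ and let $s$ be a positive integer. If $G$ is an $n$-vertex $K$-almost-regular $K_{s,s}$-free graph with average degree $d\ge (4Kt)^{6s}s^3$, then $G$ contains at least $n\left(\frac{d}{2K}\right)^{t-1}$ labeled induced copies of $T$.
   Context: A graph $G$ is $K$-almost-regular if $\Delta(G)\le K\delta(G)$, where $\Delta(G),\delta(G)$ are the maximum and minimum degrees. $G$ is $K_{s,s}$-free if it contains no copy of the complete bipartite graph $K_{s,s}$ as a subgraph. A labeled induced copy of $T$ in $G$ is an injective map $\varphi:V(T)\to V(G)$ such that for all distinct $u,v\in V(T)$, $\varphi(u)\varphi(v)\in E(G)$ if and only if $uv\in E(T)$. *)

theory Defs
  imports "HOL-Library.FuncSet" Complex_Main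
begin

definition simple_graph :: "'a set \<Rightarrow> 'a set set \<Rightarrow> bool" where
  "simple_graph V E \<longleftrightarrow> finite V \<and> (\<forall>e\<in>E. \<exists>u v. e = {u, v} \<and> u \<noteq> v \<and> u \<in> V \<and> v \<in> V)"

definition adj :: "'a set set \<Rightarrow> 'a \<Rightarrow> 'a \<Rightarrow> bool" where
  "adj E u v \<longleftrightarrow> {u, v} \<in> E"

definition degree :: "'a set \<Rightarrow> 'a set set \<Rightarrow> 'a \<Rightarrow> nat" where
  "degree V E v = card {u \<in> V. adj E u v}"

definition max_degree :: "'a set \<Rightarrow> 'a set set \<Rightarrow> nat" where
  "max_degree V E = Max (degree V E ` V)"

definition min_degree :: "'a set \<Rightarrow> 'a set set \<Rightarrow> nat" where
  "min_degree V E = Min (degree V E ` V)"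

definition almost_regular :: "real \<Rightarrow> 'a set \<Rightarrow> 'a set set \<Rightarrow> bool" where
  "almost_regular K V E \<longleftrightarrow> real (max_degree V E) \<le> K * real (min_degree V E)"

definition average_degree :: "'a set \<Rightarrow> 'a set set \<Rightarrow> real" where
  "average_degree V E = 2 * real (card E) / real (card V)"

definition Kss_free :: "nat \<Rightarrow> 'a set \<Rightarrow> 'a set set \<Rightarrow> bool" where
  "Kss_free s V E \<longleftrightarrow> \<not> (\<exists>A B. A \<subseteq> V \<and> B \<subseteq> V \<and> A \<inter> B = {} \<and> card A = s \<and> card B = s
      \<and> (\<forall>a\<in>A. \<forall>b\<in>B. adj E a b))"

definition is_walk :: "'a set \<Rightarrow> 'a set set \<Rightarrow> 'a list \<Rightarrow> bool" where
  "is_walk V E xs \<longleftrightarrow> xs \<noteq> [] \<and> set xs \<subseteq> V \<and> (\<forall>i. Suc i < length xs \<longrightarrow> adj E (xs ! i) (xs ! Suc i))"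

definition connected_graph :: "'a set \<Rightarrow> 'a set set \<Rightarrow> bool" where
  "connected_graph V E \<longleftrightarrow> V \<noteq> {} \<and>
     (\<forall>u\<in>V. \<forall>v\<in>V. \<exists>xs. is_walk V E xs \<and> hd xs = u \<and> last xs = v)"

definition is_cycle :: "'a set \<Rightarrow> 'a set set \<Rightarrow> 'a list \<Rightarrow> bool" where
  "is_cycle V E xs \<longleftrightarrow> is_walk V E xs \<and> distinct xs \<and> length xs \<ge> 3 \<and> adj E (last xs) (hd xs)"

definition is_tree :: "'a set \<Rightarrow> 'a set set \<Rightarrow> bool" where
  "is_tree V E \<longleftrightarrow> simple_graph V E \<and> connected_graph V E \<and> \<not> (\<exists>xs. is_cycle V E xs)"

(* labeled induced copies of (VT,ET) in (V,E): injective maps VT \<rightarrow> V (as extensional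
   functions, so that distinct maps are distinct objects) preserving adjacency and non-adjacency *)
definition induced_copies :: "'b set \<Rightarrow> 'b set set \<Rightarrow> 'a set \<Rightarrow> 'a set set \<Rightarrow> ('b \<Rightarrow> 'a) set" where
  "induced_copies VT ET V E = {\<phi> \<in> VT \<rightarrow>\<^sub>E V. inj_on \<phi> VT \<and>
      (\<forall>u\<in>VT. \<forall>v\<in>VT. u \<noteq> v \<longrightarrow> (adj E (\<phi> u) (\<phi> v) \<longleftrightarrow> adj ET u v))}"

end

theory Submission
  imports Defs
begin

lemma adj_sym: "adj E u v = adj E v u"
  by (simp add: adj_def insert_commute)

lemma adj_irrefl: "simple_graph V E \<Longrightarrow> \<not> adj E u u"
  unfolding simple_graph_def adj_def by (metis doubleton_eq_iff insert_absorb2)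

lemma adj_in_V: "simple_graph V E \<Longrightarrow> adj E u v \<Longrightarrow> u \<in> V \<and> v \<in> V"
  unfolding simple_graph_def adj_def by (metis doubleton_eq_iff)

fun wk :: "'a set set \<Rightarrow> 'a list \<Rightarrow> bool" where
  "wk E [] = True"
| "wk E [x] = True"
| "wk E (x # y # xs) = (adj E x y \<and> wk E (y # xs))"

lemma wk_iff: "wk E xs = (\<forall>i. Suc i < length xs \<longrightarrow> adj E (xs ! i) (xs ! Suc i))"
proof (induction E xs rule: wk.induct)
  case (3 E x y xs)
  show ?case
  proof
    assume "wk E (x # y # xs)"
    then show "\<forall>i. Suc i < length (x # y # xs) \<longrightarrow> adj E ((x # y # xs) ! i) ((x # y # xs) ! Suc i)"
      using 3 by (auto simp: nth_Cons split: nat.splits)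
  next
    assume h: "\<forall>i. Suc i < length (x # y # xs) \<longrightarrow> adj E ((x # y # xs) ! i) ((x # y # xs) ! Suc i)"
    have "adj E x y" using h[rule_format, of 0] by simp
    moreover have "\<forall>i. Suc i < length (y # xs) \<longrightarrow> adj E ((y # xs) ! i) ((y # xs) ! Suc i)"
      using h by (metis Suc_less_eq length_Cons nth_Cons_Suc)
    ultimately show "wk E (x # y # xs)" using 3 by simp
  qed
qed auto

lemma is_walk_wk: "is_walk V E xs = (xs \<noteq> [] \<and> set xs \<subseteq> V \<and> wk E xs)"
  unfolding is_walk_def wk_iff by auto

lemma wk_Cons: "wk E (x # xs) = (wk E xs \<and> (xs \<noteq> [] \<longrightarrow> adj E x (hd xs)))"
  by (cases xs) auto

lemma wk_append: "wk E (xs @ ys) = (wk E xs \<and> wk E ys \<and> (xs \<noteq> [] \<longrightarrow> ys \<noteq> [] \<longrightarrow> adj E (last xs) (hd ys)))"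
  by (induction xs) (auto simp: wk_Cons)

lemma wk_shorten:
  "wk E xs \<Longrightarrow> xs \<noteq> [] \<Longrightarrow> \<exists>ys. wk E ys \<and> distinct ys \<and> ys \<noteq> [] \<and> hd ys = hd xs \<and> last ys = last xs \<and> set ys \<subseteq> set xs"
proof (induction "length xs" arbitrary: xs rule: less_induct)
  case less
  show ?case
  proof (cases "distinct xs")
    case True then show ?thesis using less.prems by blast
  next
    case False
    then obtain a b c y where xs: "xs = a @ [y] @ b @ [y] @ c" using not_distinct_decomp by blast
    let ?zs = "a @ y # c"
    have w: "wk E ?zs" using less.prems(1) unfolding xs by (auto simp: wk_append wk_Cons)
    have l: "length ?zs < length xs" using xs by simp
    have "hd ?zs = hd xs" "last ?zs = last xs" "set ?zs \<subseteq> set xs" using xs by (auto simp: hd_append)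
    then show ?thesis using less.hyps[OF l w] by auto
  qed
qed

lemma tree_card_ge1: "is_tree VT ET \<Longrightarrow> card VT \<ge> 1"
  unfolding is_tree_def simple_graph_def connected_graph_def
  by (simp add: Suc_leI card_gt_0_iff)

lemma tree_path:
  assumes "is_tree VT ET" "u \<in> VT" "v \<in> VT"
  shows "\<exists>ys. wk ET ys \<and> distinct ys \<and> ys \<noteq> [] \<and> hd ys = u \<and> last ys = v \<and> set ys \<subseteq> VT"
proof -
  obtain xs where "is_walk VT ET xs" "hd xs = u" "last xs = v"
    using assms unfolding is_tree_def connected_graph_def by blast
  then show ?thesis using wk_shorten[of ET xs] unfolding is_walk_wk by blast
qed

lemma tree_leaf:
  assumes T: "is_tree VT ET" and c: "card VT \<ge> 2"
  shows "\<exists>l p. l \<in> VT \<and> p \<in> VT \<and> l \<noteq> p \<and> adj ET l p \<and> (\<forall>w. adj ET l w \<longrightarrow> w = p)"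
proof -
  have sg: "simple_graph VT ET" and fin: "finite VT" using T unfolding is_tree_def simple_graph_def by auto
  have nocyc: "\<not> is_cycle VT ET zs" for zs using T unfolding is_tree_def by blast
  let ?S = "{xs. wk ET xs \<and> distinct xs \<and> xs \<noteq> [] \<and> set xs \<subseteq> VT}"
  have finS: "finite ?S"
    by (rule finite_subset[OF _ finite_subset_distinct[OF fin]]) auto
  obtain u v where uv: "u \<in> VT" "v \<in> VT" "u \<noteq> v"
  proof -
    have "\<not> (\<exists>a. VT \<subseteq> {a})"
    proof
      assume "\<exists>a. VT \<subseteq> {a}"
      then obtain a where "VT \<subseteq> {a}" by blast
      then have "card VT \<le> 1" using card_mono[of "{a}" VT] by simp
      then show False using c by simp
    qed
    then show ?thesis using that by blast
  qed
  obtain ys0 where ys0: "wk ET ys0" "distinct ys0" "ys0 \<noteq> []" "hd ys0 = u" "last ys0 = v" "set ys0 \<subseteq> VT"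
    using tree_path[OF T uv(1,2)] by blast
  have "ys0 \<in> ?S" using ys0 by auto
  have len0: "length ys0 \<ge> 2"
  proof (rule ccontr)
    assume "\<not> length ys0 \<ge> 2"
    then have "length ys0 = 1" using ys0(3) by (cases ys0) (auto simp: not_less_eq_eq)
    then obtain a where "ys0 = [a]" by (metis One_nat_def length_0_conv length_Suc_conv)
    then show False using ys0 uv by simp
  qed
  define L where "L = Max (length ` ?S)"
  have "L \<in> length ` ?S" unfolding L_def using finS \<open>ys0 \<in> ?S\<close> by (intro Max_in) auto
  then obtain xs where xs: "xs \<in> ?S" "length xs = L" by blast
  have maxl: "\<And>ys. ys \<in> ?S \<Longrightarrow> length ys \<le> length xs"
    using xs finS unfolding L_def by auto
  have "length xs \<ge> 2" using maxl[OF \<open>ys0 \<in> ?S\<close>] len0 by simp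
  then obtain a p l where xsd: "xs = a @ [p, l]"
  proof -
    obtain ra where ra: "rev xs = ra" by simp
    have "length ra \<ge> 2" using ra \<open>length xs \<ge> 2\<close> by auto
    then obtain l p r where "ra = l # p # r" by (cases ra; cases "tl ra") auto
    then have "xs = rev r @ [p, l]" using ra by (metis append.assoc append_Cons append_Nil rev.simps(2) rev_rev_ident)
    then show ?thesis using that by blast
  qed
  have wx: "wk ET xs" "distinct xs" "set xs \<subseteq> VT" using xs by auto
  have alp: "adj ET p l" using wx(1) unfolding xsd by (simp add: wk_append)
  have pl: "p \<noteq> l" "p \<in> VT" "l \<in> VT" using wx unfolding xsd by auto
  have uniq: "w = p" if aw: "adj ET l w" for w
  proof (rule ccontr)
    assume wp: "w \<noteq> p"
    have wV: "w \<in> VT" using adj_in_V[OF sg aw] by simp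
    show False
    proof (cases "w \<in> set xs")
      case False
      have "xs @ [w] \<in> ?S" using wx False wV aw unfolding xsd by (auto simp: wk_append)
      then show False using maxl by fastforce
    next
      case True
      have wl: "w \<noteq> l" using aw adj_irrefl[OF sg] by blast
      from True obtain b c where bc: "xs = b @ w # c" by (meson split_list)
      have "c \<noteq> []" using bc wl unfolding xsd by auto
      have "length c \<noteq> 1"
      proof
        assume "length c = 1"
        then obtain q where "c = [q]" by (metis One_nat_def length_0_conv length_Suc_conv)
        then have "b @ [w, q] = a @ [p, l]" using bc xsd by simp
        then show False using wp by simp
      qed
      then have lc: "length c \<ge> 2" using \<open>c \<noteq> []\<close> by (cases c) (auto simp: Suc_le_eq)
      have lastc: "last c = l" using bc xsd \<open>c \<noteq> []\<close> by (metis last_ConsR last_appendR last_snoc list.distinct(1))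
      have "is_cycle VT ET (w # c)"
        unfolding is_cycle_def is_walk_wk
        using wx bc lc lastc aw by (auto simp: wk_append adj_sym)
      then show False using nocyc by blast
    qed
  qed
  show ?thesis using pl alp uniq by (metis adj_sym)
qed

definition del_edges :: "'b \<Rightarrow> 'b set set \<Rightarrow> 'b set set" where
  "del_edges l ET = {e \<in> ET. l \<notin> e}"

lemma adj_del: "adj (del_edges l ET) a b = (adj ET a b \<and> a \<noteq> l \<and> b \<noteq> l)"
  unfolding adj_def del_edges_def by auto

lemma wk_del: "wk ET ys \<Longrightarrow> l \<notin> set ys \<Longrightarrow> wk (del_edges l ET) ys"
  by (induction ET ys rule: wk.induct) (auto simp: adj_del)

lemma tree_del:
  assumes T: "is_tree VT ET" and c: "card VT \<ge> 2" and l: "l \<in> VT"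
    and lp: "\<forall>w. adj ET l w \<longrightarrow> w = p"
  shows "is_tree (VT - {l}) (del_edges l ET)"
proof -
  have sg: "simple_graph VT ET" and fin: "finite VT" using T unfolding is_tree_def simple_graph_def by auto
  have sg': "simple_graph (VT - {l}) (del_edges l ET)"
    using sg unfolding simple_graph_def del_edges_def by fastforce
  have ne: "VT - {l} \<noteq> {}"
  proof
    assume "VT - {l} = {}"
    then have "VT \<subseteq> {l}" by blast
    then have "card VT \<le> 1" using card_mono[of "{l}" VT] by simp
    then show False using c by simp
  qed
  have conn: "\<exists>xs. is_walk (VT - {l}) (del_edges l ET) xs \<and> hd xs = u \<and> last xs = v"
    if u: "u \<in> VT - {l}" and v: "v \<in> VT - {l}" for u v
  proof -
    obtain ys where ys: "wk ET ys" "distinct ys" "ys \<noteq> []" "hd ys = u" "last ys = v" "set ys \<subseteq> VT"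
      using tree_path[OF T, of u v] u v by blast
    have "l \<notin> set ys"
    proof
      assume "l \<in> set ys"
      then obtain a b where ab: "ys = a @ l # b" by (meson split_list)
      have "a \<noteq> []" using ab ys(4) u by auto
      have "b \<noteq> []" using ab ys(5) v by auto
      have "adj ET l (last a)" "adj ET l (hd b)"
        using ys(1) \<open>a \<noteq> []\<close> \<open>b \<noteq> []\<close> unfolding ab by (auto simp: wk_append wk_Cons adj_sym)
      then have "last a = hd b" using lp by blast
      moreover have "last a \<in> set a" "hd b \<in> set b" using \<open>a \<noteq> []\<close> \<open>b \<noteq> []\<close> by auto
      ultimately show False using ys(2) unfolding ab by auto
    qed
    then show ?thesis using ys wk_del[OF ys(1)] unfolding is_walk_wk by blast
  qed
  have nocyc: "\<not> is_cycle (VT - {l}) (del_edges l ET) xs" for xs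
  proof
    assume "is_cycle (VT - {l}) (del_edges l ET) xs"
    then have "is_cycle VT ET xs" unfolding is_cycle_def is_walk_def by (auto simp: adj_del)
    then show False using T unfolding is_tree_def by blast
  qed
  show ?thesis unfolding is_tree_def connected_graph_def using sg' ne conn nocyc by blast
qed

definition codeg :: "'a set \<Rightarrow> 'a set set \<Rightarrow> 'a \<Rightarrow> 'a \<Rightarrow> nat" where
  "codeg V E y z = card {w\<in>V. adj E y w \<and> adj E z w}"

lemma codeg_sym: "codeg V E y z = codeg V E z y"
  unfolding codeg_def by (rule arg_cong[where f=card]) blast

lemma kss_common:
  assumes sg: "simple_graph V E" and kf: "Kss_free s V E" and S: "S \<subseteq> V" "card S = s"
  shows "card {z\<in>V. \<forall>w\<in>S. adj E z w} \<le> s - 1"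
proof (rule ccontr)
  assume "\<not> ?thesis"
  then have "s \<le> card {z\<in>V. \<forall>w\<in>S. adj E z w}" by linarith
  then obtain B where B: "B \<subseteq> {z\<in>V. \<forall>w\<in>S. adj E z w}" "card B = s"
    using obtain_subset_with_card_n[of s "{z\<in>V. \<forall>w\<in>S. adj E z w}"] by blast
  have "S \<inter> B = {}" using B adj_irrefl[OF sg] by blast
  moreover have "\<forall>a\<in>S. \<forall>b\<in>B. adj E a b"
  proof (intro ballI)
    fix a b assume "a \<in> S" "b \<in> B"
    then have "adj E b a" using B by blast
    then show "adj E a b" by (simp add: adj_sym)
  qed
  moreover have "B \<subseteq> V" using B(1) by blast
  ultimately have "\<exists>A B. A \<subseteq> V \<and> B \<subseteq> V \<and> A \<inter> B = {} \<and> card A = s \<and> card B = s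
      \<and> (\<forall>a\<in>A. \<forall>b\<in>B. adj E a b)" using S B(2) by (intro exI[of _ S] exI[of _ B]) simp
  then show False using kf unfolding Kss_free_def by (rule notE[rotated])
qed

lemma sg_finite: "simple_graph V E \<Longrightarrow> finite V"
  by (simp add: simple_graph_def)

lemma sg_edge: "simple_graph V E \<Longrightarrow> e \<in> E \<Longrightarrow> \<exists>u v. e = {u, v} \<and> u \<noteq> v \<and> u \<in> V \<and> v \<in> V"
  by (simp add: simple_graph_def)

lemma handshake_le:
  assumes sg: "simple_graph V E" and D: "\<forall>v\<in>V. degree V E v \<le> D"
  shows "2 * card E \<le> card V * D"
proof -
  have fin: "finite V" using sg by (rule sg_finite)
  define P where "P = {p \<in> V \<times> V. adj E (fst p) (snd p)}"
  have finE: "finite E"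
  proof -
    have "E \<subseteq> Pow V" using sg_edge[OF sg] by blast
    then show ?thesis using fin by (simp add: finite_subset)
  qed
  have Pun: "P = (\<Union>e\<in>E. {p. {fst p, snd p} = e})"
  proof
    show "P \<subseteq> (\<Union>e\<in>E. {p. {fst p, snd p} = e})" unfolding P_def adj_def by blast
    show "(\<Union>e\<in>E. {p. {fst p, snd p} = e}) \<subseteq> P"
    proof
      fix p assume "p \<in> (\<Union>e\<in>E. {p. {fst p, snd p} = e})"
      then have a: "adj E (fst p) (snd p)" unfolding adj_def by blast
      then show "p \<in> P" unfolding P_def using adj_in_V[OF sg a] by (cases p) auto
    qed
  qed
  have seq: "\<exists>u v. u \<noteq> v \<and> {p. {fst p, snd p} = e} = {(u, v), (v, u)}" if eE: "e \<in> E" for e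
  proof -
    obtain u v where e: "e = {u, v}" "u \<noteq> v" using sg_edge[OF sg eE] by blast
    have "{p. {fst p, snd p} = e} = {(u, v), (v, u)}"
    proof (intro set_eqI iffI)
      fix p assume "p \<in> {p. {fst p, snd p} = e}"
      then have "{fst p, snd p} = {u, v}" using e by simp
      moreover obtain a b where p: "p = (a, b)" by force
      ultimately have "{a, b} = {u, v}" by simp
      then have "(a = u \<and> b = v) \<or> (a = v \<and> b = u)" by (simp add: doubleton_eq_iff)
      then show "p \<in> {(u, v), (v, u)}" using p by blast
    next
      fix p assume "p \<in> {(u, v), (v, u)}"
      then have "p = (u, v) \<or> p = (v, u)" by blast
      then show "p \<in> {p. {fst p, snd p} = e}"
      proof (elim disjE)
        assume "p = (u, v)" then show ?thesis using e(1) by simp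
      next
        assume "p = (v, u)" then show ?thesis using e(1) by (simp add: insert_commute)
      qed
    qed
    then show ?thesis using e by blast
  qed
  have c2: "card {p. {fst p, snd p} = e} = 2" "finite {p. {fst p, snd p} = e}" if "e \<in> E" for e
    using seq[OF that] by auto
  have "card P = (\<Sum>e\<in>E. card {p. {fst p, snd p} = e})"
    unfolding Pun
  proof (rule card_UN_disjoint[OF finE])
    show "\<forall>e\<in>E. finite {p. {fst p, snd p} = e}" using c2 by blast
    show "\<forall>i\<in>E. \<forall>j\<in>E. i \<noteq> j \<longrightarrow> {p. {fst p, snd p} = i} \<inter> {p. {fst p, snd p} = j} = {}" by auto
  qed
  also have "\<dots> = 2 * card E" using c2 by simp
  finally have cP: "card P = 2 * card E" .
  have "P = (SIGMA u:V. {v\<in>V. adj E u v})" unfolding P_def by auto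
  then have "card P = (\<Sum>u\<in>V. card {v\<in>V. adj E u v})" using fin by (simp add: card_SigmaI)
  also have "\<dots> = (\<Sum>u\<in>V. degree V E u)" unfolding degree_def using adj_sym[of E] by presburger
  also have "\<dots> \<le> (\<Sum>u\<in>V. D)" using D by (intro sum_mono) auto
  finally show ?thesis using cP by simp
qed

lemma bad_count:
  assumes sg: "simple_graph V E" and kf: "Kss_free s V E" and y: "y \<in> V"
    and D: "\<forall>v\<in>V. degree V E v \<le> D"
  shows "card {z\<in>V. codeg V E y z \<ge> m} * (m choose s) \<le> (s - 1) * (D choose s)"
proof -
  have fin: "finite V" using sg by (rule sg_finite)
  define A where "A z = {w\<in>V. adj E y w \<and> adj E z w}" for z
  define Ny where "Ny = {w\<in>V. adj E y w}"
  define SS where "SS = {S. S \<subseteq> Ny \<and> card S = s}"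
  have finNy: "finite Ny" using fin unfolding Ny_def by auto
  have finSS: "finite SS" unfolding SS_def using finNy by (auto intro: finite_subset[of _ "Pow Ny"])
  have AN: "A z \<subseteq> Ny" for z unfolding A_def Ny_def by auto
  let ?Bad = "{z\<in>V. codeg V E y z \<ge> m}"
  have "card ?Bad * (m choose s) = (\<Sum>z\<in>?Bad. m choose s)" by simp
  also have "\<dots> \<le> (\<Sum>z\<in>?Bad. card (A z) choose s)"
    by (intro sum_mono binomial_right_mono) (auto simp: codeg_def A_def)
  also have "\<dots> \<le> (\<Sum>z\<in>V. card (A z) choose s)"
    by (intro sum_mono2 fin) auto
  also have "\<dots> = (\<Sum>z\<in>V. \<Sum>S\<in>SS. if S \<subseteq> A z then 1 else 0)"
  proof (intro sum.cong refl)
    fix z assume "z \<in> V"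
    have "card (A z) choose s = card {S. S \<subseteq> A z \<and> card S = s}"
      using n_subsets[of "A z" s] finite_subset[OF AN finNy] by simp
    also have "{S. S \<subseteq> A z \<and> card S = s} = {S\<in>SS. S \<subseteq> A z}"
      unfolding SS_def using AN by blast
    also have "card \<dots> = (\<Sum>S\<in>SS. if S \<subseteq> A z then 1 else 0)"
      using sum.inter_filter[OF finSS, of "\<lambda>_. 1::nat" "\<lambda>S. S \<subseteq> A z"] by simp
    finally show "card (A z) choose s = (\<Sum>S\<in>SS. if S \<subseteq> A z then 1 else 0)" .
  qed
  also have "\<dots> = (\<Sum>S\<in>SS. \<Sum>z\<in>V. if S \<subseteq> A z then 1 else 0)" by (rule sum.swap)
  also have "\<dots> = (\<Sum>S\<in>SS. card {z\<in>V. S \<subseteq> A z})"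
    using sum.inter_filter[OF fin, of "\<lambda>_. 1::nat"] by simp
  also have "\<dots> \<le> (\<Sum>S\<in>SS. s - 1)"
  proof (intro sum_mono)
    fix S assume S: "S \<in> SS"
    then have SV: "S \<subseteq> V" "card S = s" unfolding SS_def Ny_def by auto
    have "{z\<in>V. S \<subseteq> A z} \<subseteq> {z\<in>V. \<forall>w\<in>S. adj E z w}" unfolding A_def by auto
    then have "card {z\<in>V. S \<subseteq> A z} \<le> card {z\<in>V. \<forall>w\<in>S. adj E z w}"
      by (intro card_mono) (use fin in auto)
    also have "\<dots> \<le> s - 1" by (rule kss_common[OF sg kf SV])
    finally show "card {z\<in>V. S \<subseteq> A z} \<le> s - 1" .
  qed
  also have "\<dots> = card SS * (s - 1)" by simp
  also have "card SS = card Ny choose s" unfolding SS_def using n_subsets[OF finNy] by simp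
  also have "card Ny = degree V E y" unfolding Ny_def degree_def using adj_sym[of E y] by presburger
  also have "(degree V E y choose s) * (s - 1) \<le> (D choose s) * (s - 1)"
    using D y by (intro mult_right_mono binomial_right_mono) auto
  finally show ?thesis by (simp add: mult.commute)
qed

lemma choose_Suc_mult: "(n choose Suc k) * Suc k = (n choose k) * (n - k)"
proof (cases n)
  case 0 then show ?thesis by simp
next
  case (Suc n')
  have "(n choose Suc k) * Suc k = n * (n' choose k)" using Suc_times_binomial_eq[of n' k] Suc by simp
  also have "\<dots> = (n - k) * (n choose k)" using binomial_absorb_comp[of n k] Suc by simp
  finally show ?thesis by simp
qed

lemma choose_ratio: "(a choose k) * (m - k) ^ k \<le> a ^ k * (m choose k)"
proof (induction k)
  case 0 then show ?case by simp
next
  case (Suc k)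
  have "(a choose Suc k) * (m - Suc k) ^ Suc k * Suc k = ((a choose Suc k) * Suc k) * ((m - Suc k) ^ k * (m - Suc k))"
    by (simp only: power_Suc mult_ac)
  also have "\<dots> = ((a choose k) * (a - k)) * ((m - Suc k) ^ k * (m - Suc k))"
    by (simp only: choose_Suc_mult)
  also have "\<dots> = ((a choose k) * (m - Suc k) ^ k) * ((a - k) * (m - Suc k))"
    by (simp only: mult_ac)
  also have "\<dots> \<le> ((a choose k) * (m - k) ^ k) * (a * (m - k))"
    by (intro mult_mono power_mono) auto
  also have "\<dots> \<le> (a ^ k * (m choose k)) * (a * (m - k))"
    using Suc.IH by (intro mult_right_mono) auto
  also have "\<dots> = a ^ Suc k * ((m choose k) * (m - k))" by (simp add: algebra_simps)
  also have "\<dots> = a ^ Suc k * ((m choose Suc k) * Suc k)" by (simp only: choose_Suc_mult)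
  also have "\<dots> = a ^ Suc k * (m choose Suc k) * Suc k" by (simp only: mult_ac)
  finally show ?case using mult_le_cancel2[of "(a choose Suc k) * (m - Suc k) ^ Suc k" "Suc k" "a ^ Suc k * (m choose Suc k)"] by simp
qed

definition good :: "'a set \<Rightarrow> 'a set set \<Rightarrow> real \<Rightarrow> 'b set \<Rightarrow> 'b set set \<Rightarrow> ('b \<Rightarrow> 'a) set" where
  "good V E M VT ET = {\<phi> \<in> induced_copies VT ET V E. \<forall>a\<in>VT. \<forall>b\<in>VT. a \<noteq> b \<longrightarrow> real (codeg V E (\<phi> a) (\<phi> b)) < M}"

lemma good_sub: "good V E M VT ET \<subseteq> VT \<rightarrow>\<^sub>E V"
  unfolding good_def induced_copies_def by blast

lemma good_finite: "finite V \<Longrightarrow> finite VT \<Longrightarrow> finite (good V E M VT ET)"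
  using good_sub finite_PiE by (metis finite_subset)

lemma good_single: "good V E M {a} ET = {a} \<rightarrow>\<^sub>E V"
proof
  show "good V E M {a} ET \<subseteq> {a} \<rightarrow>\<^sub>E V" by (rule good_sub)
  show "{a} \<rightarrow>\<^sub>E V \<subseteq> good V E M {a} ET"
    unfolding good_def induced_copies_def by auto
qed

lemma ext_good:
  assumes sg: "simple_graph V E"
    and lVT: "l \<notin> VT'" and pVT: "p \<in> VT'"
    and lp: "adj ET l p" and luniq: "\<forall>w. adj ET l w \<longrightarrow> w = p"
    and phi: "\<phi> \<in> good V E M VT' (del_edges l ET)"
    and xV: "x \<in> V" and xp: "adj E x (\<phi> p)" and xnot: "x \<notin> \<phi> ` VT'"
    and xnadj: "\<forall>j\<in>VT' - {p}. \<not> adj E (\<phi> j) x"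
    and xcod: "\<forall>j\<in>VT'. real (codeg V E (\<phi> j) x) < M"
  shows "\<phi>(l := x) \<in> good V E M (insert l VT') ET"
proof -
  have phiP: "\<phi> \<in> VT' \<rightarrow>\<^sub>E V" and phiinj: "inj_on \<phi> VT'"
    and phiadj: "\<forall>u\<in>VT'. \<forall>v\<in>VT'. u \<noteq> v \<longrightarrow> (adj E (\<phi> u) (\<phi> v) \<longleftrightarrow> adj (del_edges l ET) u v)"
    and phicod: "\<forall>a\<in>VT'. \<forall>b\<in>VT'. a \<noteq> b \<longrightarrow> real (codeg V E (\<phi> a) (\<phi> b)) < M"
    using phi unfolding good_def induced_copies_def by blast+
  let ?psi = "\<phi>(l := x)"
  have P: "?psi \<in> insert l VT' \<rightarrow>\<^sub>E V"
    using phiP xV unfolding PiE_def extensional_def Pi_def by auto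
  have I: "inj_on ?psi (insert l VT')"
    using phiinj xnot lVT unfolding inj_on_def by (auto split: if_splits)
  have A1: "adj E (?psi u) (?psi v) \<longleftrightarrow> adj ET u v"
    if u: "u \<in> insert l VT'" and v: "v \<in> VT'" and uv: "u \<noteq> v" for u v
  proof (cases "u = l")
    case True
    have vl: "v \<noteq> l" using v lVT by blast
    show ?thesis
    proof (cases "v = p")
      case True
      then show ?thesis using \<open>u = l\<close> vl xp lp by simp
    next
      case False
      have "\<not> adj E (\<phi> v) x" using xnadj v False by blast
      moreover have "\<not> adj ET l v" using luniq False by blast
      ultimately show ?thesis using \<open>u = l\<close> vl by (simp add: adj_sym)
    qed
  next
    case False
    then have uV: "u \<in> VT'" using u by blast
    have vl: "v \<noteq> l" using v lVT by blast
    have "adj E (\<phi> u) (\<phi> v) \<longleftrightarrow> adj (del_edges l ET) u v" using phiadj uV v uv by blast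
    then show ?thesis using False vl by (simp add: adj_del)
  qed
  have A: "\<forall>u\<in>insert l VT'. \<forall>v\<in>insert l VT'. u \<noteq> v \<longrightarrow> (adj E (?psi u) (?psi v) \<longleftrightarrow> adj ET u v)"
  proof (intro ballI impI)
    fix u v assume u: "u \<in> insert l VT'" and v: "v \<in> insert l VT'" and uv: "u \<noteq> v"
    show "adj E (?psi u) (?psi v) \<longleftrightarrow> adj ET u v"
    proof (cases "v = l")
      case False
      then show ?thesis using A1[OF u _ uv] v by blast
    next
      case True
      then have "u \<in> VT'" using u uv by blast
      then have "adj E (?psi v) (?psi u) \<longleftrightarrow> adj ET v u" using A1[of v u] v uv by blast
      then show ?thesis by (simp add: adj_sym)
    qed
  qed
  have C1: "real (codeg V E (?psi u) (?psi v)) < M"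
    if u: "u \<in> insert l VT'" and v: "v \<in> VT'" and uv: "u \<noteq> v" for u v
  proof (cases "u = l")
    case True
    have vl: "v \<noteq> l" using v lVT by blast
    then show ?thesis using True xcod v by (simp add: codeg_sym)
  next
    case False
    then have uV: "u \<in> VT'" using u by blast
    have vl: "v \<noteq> l" using v lVT by blast
    show ?thesis using phicod uV v uv False vl by simp
  qed
  have C: "\<forall>a\<in>insert l VT'. \<forall>b\<in>insert l VT'. a \<noteq> b \<longrightarrow> real (codeg V E (?psi a) (?psi b)) < M"
  proof (intro ballI impI)
    fix u v assume u: "u \<in> insert l VT'" and v: "v \<in> insert l VT'" and uv: "u \<noteq> v"
    show "real (codeg V E (?psi u) (?psi v)) < M"
    proof (cases "v = l")
      case False
      then show ?thesis using C1[OF u _ uv] v by blast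
    next
      case True
      then have "u \<in> VT'" using u uv by blast
      then have "real (codeg V E (?psi v) (?psi u)) < M" using C1[of v u] v uv by blast
      then show ?thesis by (simp add: codeg_sym)
    qed
  qed
  show ?thesis unfolding good_def induced_copies_def using P I A C by blast
qed

lemma tree_finite: "is_tree VT ET \<Longrightarrow> finite VT"
  by (simp add: is_tree_def simple_graph_def)

lemma main_count:
  assumes sg: "simple_graph V E"
    and deg: "\<forall>v\<in>V. \<delta> \<le> real (degree V E v)"
    and bad: "\<forall>y\<in>V. real (card {z\<in>V. M \<le> real (codeg V E y z)}) \<le> B"
    and par: "real t0 * (1 + M + B) \<le> \<delta> / 2" and d0: "0 \<le> \<delta>" and M0: "0 \<le> M" and B0: "0 \<le> B"
  shows "is_tree VT ET \<Longrightarrow> card VT = k \<Longrightarrow> k \<le> t0 \<Longrightarrow>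
         real (card V) * (\<delta> / 2) ^ (k - 1) \<le> real (card (good V E M VT ET))"
proof (induction k arbitrary: VT ET)
  case 0
  then show ?case using tree_card_ge1 by fastforce
next
  case (Suc k)
  have finV: "finite V" using sg by (rule sg_finite)
  have finVT: "finite VT" using Suc.prems(1) by (rule tree_finite)
  show ?case
  proof (cases "k = 0")
    case True
    then obtain a where a: "VT = {a}" using Suc.prems(2) card_1_singletonE by auto
    have "card (good V E M VT ET) = card V"
      unfolding a good_single using card_PiE[of "{a}" "\<lambda>_. V"] by simp
    then show ?thesis using True by simp
  next
    case False
    have c2: "card VT \<ge> 2" using Suc.prems(2) False by simp
    obtain l p where lp: "l \<in> VT" "p \<in> VT" "l \<noteq> p" "adj ET l p" "\<forall>w. adj ET l w \<longrightarrow> w = p"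
      using tree_leaf[OF Suc.prems(1) c2] by blast
    define VT' where "VT' = VT - {l}"
    define ET' where "ET' = del_edges l ET"
    have T': "is_tree VT' ET'" unfolding VT'_def ET'_def using tree_del[OF Suc.prems(1) c2 lp(1) lp(5)] .
    have cVT': "card VT' = k" unfolding VT'_def using Suc.prems(2) card_Diff_singleton[OF lp(1)] by simp
    have IH: "real (card V) * (\<delta> / 2) ^ (k - 1) \<le> real (card (good V E M VT' ET'))"
      using Suc.IH[OF T' cVT'] Suc.prems(3) by simp
    have VTeq: "VT = insert l VT'" unfolding VT'_def using insert_Diff[OF lp(1)] by simp
    have lVT: "l \<notin> VT'" unfolding VT'_def by simp
    have pVT: "p \<in> VT'" unfolding VT'_def using lp(2,3) by simp
    define G' where "G' = good V E M VT' ET'"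
    define X where "X \<phi> = \<phi> ` VT' \<union> (\<Union>j\<in>VT' - {p}. {w\<in>V. adj E (\<phi> p) w \<and> adj E (\<phi> j) w})
        \<union> (\<Union>j\<in>VT'. {z\<in>V. M \<le> real (codeg V E (\<phi> j) z)})" for \<phi> :: "'b \<Rightarrow> 'a"
    define C where "C \<phi> = {x\<in>V. adj E x (\<phi> p)} - X \<phi>" for \<phi> :: "'b \<Rightarrow> 'a"
    have finVT': "finite VT'" using finVT unfolding VT'_def by simp
    have finVT'p: "finite (VT' - {p})" using finVT' by simp
    have finC: "finite (C \<phi>)" for \<phi> unfolding C_def using finV by simp
    have Cbig: "\<delta> / 2 \<le> real (card (C \<phi>))" if phi: "\<phi> \<in> G'" for \<phi>
    proof -
      have phiP: "\<phi> \<in> VT' \<rightarrow>\<^sub>E V"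
        and phicod: "\<forall>a\<in>VT'. \<forall>b\<in>VT'. a \<noteq> b \<longrightarrow> real (codeg V E (\<phi> a) (\<phi> b)) < M"
        using phi unfolding G'_def good_def induced_copies_def by blast+
      have phiV: "\<phi> j \<in> V" if "j \<in> VT'" for j using phiP that by auto
      have finX1: "finite (\<phi> ` VT')" using finVT' by simp
      have finX2: "finite (\<Union>j\<in>VT' - {p}. {w\<in>V. adj E (\<phi> p) w \<and> adj E (\<phi> j) w})" using finVT' finV by simp
      have finX3: "finite (\<Union>j\<in>VT'. {z\<in>V. M \<le> real (codeg V E (\<phi> j) z)})" using finVT' finV by simp
      have finX: "finite (X \<phi>)" unfolding X_def using finX1 finX2 finX3 by simp
      have "card (\<phi> ` VT') \<le> k" using card_image_le[OF finVT', of \<phi>] cVT' by linarith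
      then have k1: "real (card (\<phi> ` VT')) \<le> real k" by (rule of_nat_mono)
      have "real (card (\<Union>j\<in>VT' - {p}. {w\<in>V. adj E (\<phi> p) w \<and> adj E (\<phi> j) w}))
            \<le> real (\<Sum>j\<in>VT' - {p}. card {w\<in>V. adj E (\<phi> p) w \<and> adj E (\<phi> j) w})"
        using card_UN_le[OF finVT'p, of "\<lambda>j. {w\<in>V. adj E (\<phi> p) w \<and> adj E (\<phi> j) w}"]
        by (rule of_nat_mono)
      also have "\<dots> = (\<Sum>j\<in>VT' - {p}. real (codeg V E (\<phi> p) (\<phi> j)))" unfolding codeg_def by (rule of_nat_sum)
      also have "\<dots> \<le> (\<Sum>j\<in>VT' - {p}. M)"
      proof (intro sum_mono)
        fix j assume j: "j \<in> VT' - {p}"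
        have jV: "j \<in> VT'" and pj: "p \<noteq> j" using j by auto
        have "real (codeg V E (\<phi> p) (\<phi> j)) < M" using phicod[rule_format, OF pVT jV pj] .
        then show "real (codeg V E (\<phi> p) (\<phi> j)) \<le> M" by simp
      qed
      also have "\<dots> = real (card (VT' - {p})) * M" by simp
      also have "\<dots> \<le> real k * M"
      proof -
        have "card (VT' - {p}) \<le> k" using card_Diff1_le[of VT' p] cVT' by linarith
        then have "real (card (VT' - {p})) \<le> real k" by (rule of_nat_mono)
        then show ?thesis using mult_right_mono M0 by blast
      qed
      finally have k2: "real (card (\<Union>j\<in>VT' - {p}. {w\<in>V. adj E (\<phi> p) w \<and> adj E (\<phi> j) w})) \<le> real k * M" .
      have "real (card (\<Union>j\<in>VT'. {z\<in>V. M \<le> real (codeg V E (\<phi> j) z)}))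
            \<le> real (\<Sum>j\<in>VT'. card {z\<in>V. M \<le> real (codeg V E (\<phi> j) z)})"
        using card_UN_le[OF finVT', of "\<lambda>j. {z\<in>V. M \<le> real (codeg V E (\<phi> j) z)}"]
        by (rule of_nat_mono)
      also have "\<dots> = (\<Sum>j\<in>VT'. real (card {z\<in>V. M \<le> real (codeg V E (\<phi> j) z)}))" by (rule of_nat_sum)
      also have "\<dots> \<le> (\<Sum>j\<in>VT'. B)" using bad phiV by (intro sum_mono) blast
      also have "\<dots> = real k * B" using cVT' by simp
      finally have k3: "real (card (\<Union>j\<in>VT'. {z\<in>V. M \<le> real (codeg V E (\<phi> j) z)})) \<le> real k * B" .
      have "card (X \<phi>) \<le> card (\<phi> ` VT') + card (\<Union>j\<in>VT' - {p}. {w\<in>V. adj E (\<phi> p) w \<and> adj E (\<phi> j) w})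
            + card (\<Union>j\<in>VT'. {z\<in>V. M \<le> real (codeg V E (\<phi> j) z)})"
        unfolding X_def by (meson add_le_mono card_Un_le le_refl order_trans)
      then have "real (card (X \<phi>)) \<le> real k * (1 + M + B)" using k1 k2 k3 by (simp add: algebra_simps)
      also have "\<dots> \<le> real t0 * (1 + M + B)"
        using Suc.prems(3) M0 B0 by (intro mult_right_mono) auto
      finally have Xs: "real (card (X \<phi>)) \<le> \<delta> / 2" using par by simp
      have "card {x\<in>V. adj E x (\<phi> p)} = degree V E (\<phi> p)" unfolding degree_def by simp
      then have dN: "\<delta> \<le> real (card {x\<in>V. adj E x (\<phi> p)})" using deg phiV[OF pVT] by simp
      have "card {x\<in>V. adj E x (\<phi> p)} - card (X \<phi>) \<le> card (C \<phi>)"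
        unfolding C_def by (rule diff_card_le_card_Diff[OF finX])
      then have "real (card {x\<in>V. adj E x (\<phi> p)}) - real (card (X \<phi>)) \<le> real (card (C \<phi>))" by linarith
      then show ?thesis using dN Xs by linarith
    qed
    have ext: "\<phi>(l := x) \<in> good V E M VT ET" if phi: "\<phi> \<in> G'" and x: "x \<in> C \<phi>" for \<phi> x
    proof -
      have xV: "x \<in> V" and xp: "adj E x (\<phi> p)" and xnot: "x \<notin> \<phi> ` VT'"
        and xnadj: "\<forall>j\<in>VT' - {p}. \<not> adj E (\<phi> j) x"
        and xcod: "\<forall>j\<in>VT'. real (codeg V E (\<phi> j) x) < M"
        using x unfolding C_def X_def by (auto simp: adj_sym)
      show ?thesis unfolding VTeq
        using ext_good[OF sg lVT pVT lp(4) lp(5) _ xV xp xnot xnadj xcod] phi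
        unfolding G'_def ET'_def by blast
    qed
    have inj: "inj_on (\<lambda>(\<phi>, x). \<phi>(l := x)) (Sigma G' C)"
    proof (rule inj_onI)
      fix a b assume a: "a \<in> Sigma G' C" and b: "b \<in> Sigma G' C"
        and eq: "(\<lambda>(\<phi>, x). \<phi>(l := x)) a = (\<lambda>(\<phi>, x). \<phi>(l := x)) b"
      obtain \<phi>1 x1 where a': "a = (\<phi>1, x1)" "\<phi>1 \<in> G'" using a by auto
      obtain \<phi>2 x2 where b': "b = (\<phi>2, x2)" "\<phi>2 \<in> G'" using b by auto
      have e: "\<phi>1(l := x1) = \<phi>2(l := x2)" using eq a' b' by simp
      have "x1 = x2" using fun_cong[OF e, of l] by simp
      moreover have "\<phi>1 = \<phi>2"
      proof
        fix w show "\<phi>1 w = \<phi>2 w"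
        proof (cases "w = l")
          case True
          have "\<phi>1 \<in> VT' \<rightarrow>\<^sub>E V" "\<phi>2 \<in> VT' \<rightarrow>\<^sub>E V" using a'(2) b'(2) good_sub unfolding G'_def by blast+
          then show ?thesis using True lVT by (simp add: PiE_def extensional_def)
        next
          case False
          then show ?thesis using fun_cong[OF e, of w] by simp
        qed
      qed
      ultimately show "a = b" using a' b' by simp
    qed
    have finG: "finite (good V E M VT ET)" using good_finite[OF finV finVT] .
    have finG': "finite G'" unfolding G'_def using good_finite[OF finV finVT'] .
    have "card (Sigma G' C) \<le> card (good V E M VT ET)"
    proof (rule card_inj_on_le[OF inj _ finG])
      show "(\<lambda>(\<phi>, x). \<phi>(l := x)) ` Sigma G' C \<subseteq> good V E M VT ET" using ext by auto
    qed
    moreover have "card (Sigma G' C) = (\<Sum>\<phi>\<in>G'. card (C \<phi>))" using finG' finC by (simp add: card_SigmaI)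
    ultimately have "(\<Sum>\<phi>\<in>G'. real (card (C \<phi>))) \<le> real (card (good V E M VT ET))"
      by (metis of_nat_le_iff of_nat_sum)
    moreover have "(\<Sum>\<phi>\<in>G'. \<delta> / 2) \<le> (\<Sum>\<phi>\<in>G'. real (card (C \<phi>)))" using Cbig by (intro sum_mono) blast
    moreover have "(\<Sum>\<phi>\<in>G'. \<delta> / 2) = real (card G') * (\<delta> / 2)" by simp
    moreover have "real (card V) * (\<delta> / 2) ^ k \<le> real (card G') * (\<delta> / 2)"
    proof -
      obtain k' where k': "k = Suc k'" using False by (cases k) auto
      have "real (card V) * (\<delta> / 2) ^ k = (real (card V) * (\<delta> / 2) ^ (k - 1)) * (\<delta> / 2)"
        using k' by simp
      also have "\<dots> \<le> real (card G') * (\<delta> / 2)" using IH d0 unfolding G'_def by (intro mult_right_mono) auto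
      finally show ?thesis .
    qed
    ultimately show ?thesis by simp
  qed
qed

lemma bad_real:
  assumes sg: "simple_graph V E" and kf: "Kss_free s V E" and y: "y \<in> V"
    and D: "\<forall>v\<in>V. degree V E v \<le> Dn"
    and s1: "s \<ge> 1" and Ms: "2 * real s \<le> M"
    and DM: "real Dn \<le> c * M" and c0: "0 \<le> c"
  shows "real (card {z\<in>V. M \<le> real (codeg V E y z)}) \<le> real (s - 1) * (2 * c) ^ s"
proof -
  define m where "m = nat \<lceil>M\<rceil>"
  have M0: "0 \<le> M" using Ms by simp
  have mM: "M \<le> real m" unfolding m_def by linarith
  have iff: "M \<le> real n \<longleftrightarrow> m \<le> n" for n :: nat unfolding m_def by linarith
  have eqset: "{z\<in>V. M \<le> real (codeg V E y z)} = {z\<in>V. m \<le> codeg V E y z}" using iff by blast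
  let ?b = "card {z\<in>V. m \<le> codeg V E y z}"
  have h1: "?b * (m choose s) \<le> (s - 1) * (Dn choose s)" by (rule bad_count[OF sg kf y D])
  have h2: "(Dn choose s) * (m - s) ^ s \<le> Dn ^ s * (m choose s)" by (rule choose_ratio)
  have sm: "s \<le> m" using mM Ms s1 by linarith
  have mpos: "0 < (m choose s)" using sm by simp
  have "?b * (m - s) ^ s * (m choose s) = (?b * (m choose s)) * (m - s) ^ s" by (simp only: mult_ac)
  also have "\<dots> \<le> ((s - 1) * (Dn choose s)) * (m - s) ^ s" using h1 by (rule mult_right_mono) simp
  also have "\<dots> = (s - 1) * ((Dn choose s) * (m - s) ^ s)" by (simp only: mult_ac)
  also have "\<dots> \<le> (s - 1) * (Dn ^ s * (m choose s))" using h2 by (rule mult_left_mono) simp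
  also have "\<dots> = ((s - 1) * Dn ^ s) * (m choose s)" by (simp only: mult_ac)
  finally have h3: "?b * (m - s) ^ s \<le> (s - 1) * Dn ^ s" using mpos by simp
  define r where "r = real (m - s)"
  have r: "M / 2 \<le> r" unfolding r_def using sm mM Ms by (simp add: of_nat_diff)
  have rpos: "0 < r" using r Ms s1 by simp
  have hr: "real ?b * r ^ s \<le> real (s - 1) * real Dn ^ s"
  proof -
    have "real (?b * (m - s) ^ s) \<le> real ((s - 1) * Dn ^ s)" using h3 by (rule of_nat_mono)
    then show ?thesis unfolding r_def by simp
  qed
  have "real Dn \<le> (2 * c) * r"
  proof -
    have "c * M \<le> c * (2 * r)" using r c0 by (intro mult_left_mono) auto
    then show ?thesis using DM by simp
  qed
  then have "real Dn ^ s \<le> ((2 * c) * r) ^ s" by (rule power_mono) simp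
  then have "real (s - 1) * real Dn ^ s \<le> real (s - 1) * ((2 * c) * r) ^ s" by (rule mult_left_mono) simp
  also have "\<dots> = (real (s - 1) * (2 * c) ^ s) * r ^ s" by (simp add: power_mult_distrib)
  finally have "real ?b * r ^ s \<le> (real (s - 1) * (2 * c) ^ s) * r ^ s" using hr by linarith
  then have "real ?b \<le> real (s - 1) * (2 * c) ^ s" using rpos by (simp add: mult_le_cancel_right)
  then show ?thesis using eqset by simp
qed

theorem theorem1p3:
  fixes VT :: "'b set" and ET :: "'b set set" and V :: "'a set" and E :: "'a set set"
    and t s n :: nat and K d :: real
  assumes "is_tree VT ET" and "card VT = t"
    and "K > 1" and "s > 0"
    and "simple_graph V E" and "card V = n"
    and "almost_regular K V E" and "Kss_free s V E"
    and "d = average_degree V E"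
    and "d \<ge> (4 * K * real t) ^ (6 * s) * real s ^ 3"
  shows "real (card (induced_copies VT ET V E)) \<ge> real n * (d / (2 * K)) ^ (t - 1)"
proof -
  note T = assms(1) and tT = assms(2) and K1 = assms(3) and s0 = assms(4) and sg = assms(5)
    and nV = assms(6) and ar = assms(7) and kf = assms(8) and dd = assms(9) and dthr = assms(10)
  have t1: "t \<ge> 1" using tree_card_ge1[OF T] tT by simp
  have s1: "s \<ge> 1" using s0 by simp
  define X where "X = 4 * K * real t"
  have X4: "4 \<le> X"
  proof -
    have "(4::real) * 1 * 1 \<le> 4 * K * real t" using K1 t1 by (intro mult_mono) auto
    then show ?thesis unfolding X_def by simp
  qed
  have X1: "1 \<le> X" using X4 by simp
  have Xpos: "0 < X" using X4 by simp
  have thrpos: "0 < X ^ (6 * s) * real s ^ 3" using Xpos s1 by simp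
  have dthr': "X ^ (6 * s) * real s ^ 3 \<le> d" using dthr unfolding X_def .
  have dpos: "0 < d" using thrpos dthr' by linarith
  have finV: "finite V" using sg by (rule sg_finite)
  have npos: "n > 0"
  proof (rule ccontr)
    assume "\<not> n > 0"
    then have "n = 0" by simp
    then have "d = 0" using dd nV unfolding average_degree_def by simp
    then show False using dpos by simp
  qed
  have Vne: "V \<noteq> {}" using npos nV by auto
  define dn where "dn = min_degree V E"
  define Dn where "Dn = max_degree V E"
  have degmin: "dn \<le> degree V E v" if "v \<in> V" for v
    unfolding dn_def min_degree_def using finV that by (intro Min_le) auto
  have degmax: "degree V E v \<le> Dn" if "v \<in> V" for v
    unfolding Dn_def max_degree_def using finV that by (intro Max_ge) auto
  have hs: "2 * card E \<le> card V * Dn" using handshake_le[OF sg] degmax by blast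
  have dD: "d \<le> real Dn"
  proof -
    have "real (2 * card E) \<le> real (card V * Dn)" using hs by (rule of_nat_mono)
    then have "2 * real (card E) \<le> real n * real Dn" using nV by simp
    then have "2 * real (card E) / real n \<le> real Dn" using npos by (simp add: divide_le_eq mult.commute)
    then show ?thesis using dd nV unfolding average_degree_def by simp
  qed
  have DK: "real Dn \<le> K * real dn" using ar unfolding almost_regular_def Dn_def dn_def .
  define \<delta> where "\<delta> = real dn"
  have dK: "d / K \<le> \<delta>"
  proof -
    have "d \<le> K * \<delta>" using dD DK unfolding \<delta>_def by linarith
    then show ?thesis using K1 by (simp add: divide_le_eq mult.commute)
  qed
  have dKpos: "0 < d / K" using dpos K1 by simp
  have \<delta>pos: "0 < \<delta>" using dK dKpos by linarith
  define M where "M = \<delta> / (4 * real t)"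
  define B where "B = real (s - 1) * (2 * X) ^ s"
  have tpos: "0 < real t" using t1 by simp
  have M0: "0 \<le> M" unfolding M_def using \<delta>pos tpos by simp
  have B0: "0 \<le> B" unfolding B_def using Xpos by simp
  have \<delta>X: "X ^ (6 * s) * real s ^ 3 / K \<le> \<delta>"
  proof -
    have "X ^ (6 * s) * real s ^ 3 / K \<le> d / K" using dthr' K1 by (intro divide_right_mono) auto
    then show ?thesis using dK by linarith
  qed
  have MX: "X ^ (6 * s - 1) * real s ^ 3 \<le> M"
  proof -
    have eq: "X ^ (6 * s) = X * X ^ (6 * s - 1)" using s1 by (metis Suc_pred' mult_pos_pos power_Suc zero_less_numeral less_le_trans zero_less_one s0)
    have KX: "K * (4 * real t) = X" unfolding X_def by simp
    have "X ^ (6 * s) * real s ^ 3 / K / (4 * real t) = X ^ (6 * s) * real s ^ 3 / X"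
      by (simp add: divide_divide_eq_left KX)
    also have "\<dots> = X ^ (6 * s - 1) * real s ^ 3" unfolding eq using Xpos by simp
    finally have "X ^ (6 * s - 1) * real s ^ 3 = X ^ (6 * s) * real s ^ 3 / K / (4 * real t)" by simp
    also have "\<dots> \<le> \<delta> / (4 * real t)" using \<delta>X tpos by (intro divide_right_mono) auto
    finally show ?thesis unfolding M_def .
  qed
  have Ms: "2 * real s \<le> M"
  proof -
    have "(2::real) \<le> X ^ (6 * s - 1)"
    proof -
      have "X ^ 1 \<le> X ^ (6 * s - 1)" using X1 s1 by (intro power_increasing) auto
      then show ?thesis using X4 by simp
    qed
    moreover have "real s \<le> real s ^ 3" using s1
      by (metis (mono_tags) le_add_diff_inverse numeral_le_one_iff power_increasing power_one_right
          semiring_norm(70) of_nat_1 of_nat_le_iff one_le_numeral  numeral_3_eq_3)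
    ultimately have "2 * real s \<le> X ^ (6 * s - 1) * real s ^ 3" using s1 by (intro mult_mono) auto
    then show ?thesis using MX by linarith
  qed
  have DM: "real Dn \<le> X * M"
  proof -
    have "X * M = K * \<delta>" unfolding M_def X_def using tpos by (simp add: field_simps)
    then show ?thesis using DK unfolding \<delta>_def by simp
  qed
  have bad: "\<forall>y\<in>V. real (card {z\<in>V. M \<le> real (codeg V E y z)}) \<le> B"
  proof
    fix y assume y: "y \<in> V"
    have D: "\<forall>v\<in>V. degree V E v \<le> Dn" using degmax by blast
    show "real (card {z\<in>V. M \<le> real (codeg V E y z)}) \<le> B"
      unfolding B_def using bad_real[OF sg kf y D s1 Ms DM] Xpos by simp
  qed
  have deg: "\<forall>v\<in>V. \<delta> \<le> real (degree V E v)" unfolding \<delta>_def using degmin by simp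
  have par: "real t * (1 + M + B) \<le> \<delta> / 2"
  proof -
    have tM: "real t * M = \<delta> / 4" unfolding M_def using tpos by simp
    have Y1: "1 \<le> (2 * X) ^ s" using X4 by (intro one_le_power) simp
    have B1: "1 + B \<le> real s * (2 * X) ^ s"
    proof -
      have "1 + B = 1 + (real s - 1) * (2 * X) ^ s" unfolding B_def using s1 by (simp add: of_nat_diff)
      also have "\<dots> \<le> real s * (2 * X) ^ s" using Y1 by (simp add: algebra_simps)
      finally show ?thesis .
    qed
    have P1: "(2 * X) ^ s \<le> X ^ (2 * s)"
    proof -
      have "2 * X \<le> X ^ 2" using X4 by (simp add: power2_eq_square)
      then have "(2 * X) ^ s \<le> (X ^ 2) ^ s" using Xpos by (intro power_mono) auto
      then show ?thesis by (simp add: power_mult)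
    qed
    have tX: "real t \<le> X / 4" unfolding X_def using K1 tpos by simp
    have KX: "K \<le> X / 4"
    proof -
      have "K * 1 \<le> K * real t" using K1 t1 by (intro mult_left_mono) auto
      then show ?thesis unfolding X_def by simp
    qed
    have s3: "real s \<le> real s ^ 3"
    proof -
      have "real s ^ 1 \<le> real s ^ 3" using s1 by (intro power_increasing) auto
      then show ?thesis by simp
    qed
    have "real t * (1 + B) \<le> (X / 4) * (real s * X ^ (2 * s))"
    proof (rule mult_mono[OF tX])
      show "1 + B \<le> real s * X ^ (2 * s)" using B1 P1 s1 by (meson mult_left_mono of_nat_0_le_iff order_trans)
    qed (use Xpos B0 in auto)
    also have "\<dots> \<le> X ^ (6 * s) * real s ^ 3 / K / 4"
    proof -
      have "K * (X * (real s * X ^ (2 * s))) \<le> X * (X * (real s * X ^ (2 * s)))"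
        using KX Xpos by (intro mult_right_mono) auto
      also have "\<dots> = real s * X ^ (2 * s + 2)" by (simp add: power_add power2_eq_square)
      also have "\<dots> \<le> real s ^ 3 * X ^ (6 * s)"
        using s3 X1 s1 by (intro mult_mono power_increasing) auto
      finally have "K * (X * (real s * X ^ (2 * s))) \<le> X ^ (6 * s) * real s ^ 3" by (simp add: mult.commute)
      then show ?thesis using K1 by (simp add: field_simps)
    qed
    also have "\<dots> \<le> \<delta> / 4" using \<delta>X by simp
    finally have "real t * (1 + B) \<le> \<delta> / 4" .
    then show ?thesis using tM by (simp add: algebra_simps)
  qed
  have main: "real (card V) * (\<delta> / 2) ^ (t - 1) \<le> real (card (good V E M VT ET))"
    using main_count[OF sg deg bad par _ M0 B0 T tT le_refl] \<delta>pos by simp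
  have subI: "induced_copies VT ET V E \<subseteq> VT \<rightarrow>\<^sub>E V" unfolding induced_copies_def by blast
  have finP: "finite (VT \<rightarrow>\<^sub>E V)" using tree_finite[OF T] finV by (rule finite_PiE)
  have finI: "finite (induced_copies VT ET V E)" using finite_subset[OF subI finP] .
  have subG: "good V E M VT ET \<subseteq> induced_copies VT ET V E" unfolding good_def by blast
  have "card (good V E M VT ET) \<le> card (induced_copies VT ET V E)" using card_mono[OF finI subG] .
  then have gi: "real (card (good V E M VT ET)) \<le> real (card (induced_copies VT ET V E))" by (rule of_nat_mono)
  have "(d / (2 * K)) ^ (t - 1) \<le> (\<delta> / 2) ^ (t - 1)"
  proof (rule power_mono)
    have "d / (2 * K) = (d / K) / 2" by simp
    then show "d / (2 * K) \<le> \<delta> / 2" using dK by (simp only: divide_right_mono zero_le_numeral)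
    show "0 \<le> d / (2 * K)" using dpos K1 by simp
  qed
  then have "real n * (d / (2 * K)) ^ (t - 1) \<le> real n * (\<delta> / 2) ^ (t - 1)" by (rule mult_left_mono) simp
  then show ?thesis using main[unfolded nV] gi by linarith
qed

end
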